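(* Let $k\ge 2$ be an integer. Then $\alpha_{2k+t,\,k-1}=k$ for all integers $t\ge 0$.
   Context: Let $\mathbb{K}$ be a field. For $n\ge 3$, $Q_n$ is the cycle graph on vertices $1,\dots,n$ (edges $\{i,i+1\}$ for $1\le i\le n-1$ and $\{n,1\}$); $B_n$ is the simplicial complex on $\{0,\dots,n+1\}$ whose facets are $\{0,i,j\}$ and $\{n+1,i,j\}$ for each edge $\{i,j\}$ of $Q_n$ (boundary of the bipyramid over the $n$-gon); $I_{B_n}\subset R=\mathbb{K}[x_0,\dots,x_{n+1}]$ is its Stanley-Reisner ideal, generated by $\prod_{i\in\tau}x_i$ over non-faces $\tau$. For a homogeneous ideal $I$, $I^{(m)}=R\cap\bigcap_{P\in\mathrm{Ass}(I)}I^mR_P$, $\alpha(I)=\min\{t:I_t\ne0\}$, and $\alpha_{n,m}:=\alpha(I_{B_n}^{(m)})$. *)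

theory Defs
  imports Main "HOL-Library.Poly_Mapping"
begin

text \<open>Polynomials over a coefficient ring 'a in the variables x_0, x_1, ... :
  finitely supported maps from monomials (finitely supported exponent vectors) to coefficients.\<close>
type_synonym 'a mpoly = "(nat \<Rightarrow>\<^sub>0 nat) \<Rightarrow>\<^sub>0 'a"

text \<open>The polynomial ring K[x_i : i \<in> V] as a subset of all polynomials.\<close>
definition PR :: "nat set \<Rightarrow> ('a::zero) mpoly set" where
  "PR V = {p::'a mpoly. \<forall>m\<in>Poly_Mapping.keys p. Poly_Mapping.keys m \<subseteq> V}"

definition Var :: "nat \<Rightarrow> ('a::{zero,one}) mpoly" where
  "Var i = Poly_Mapping.single (Poly_Mapping.single i 1) 1"

inductive_set gen_ideal :: "nat set \<Rightarrow> ('a::comm_ring_1) mpoly set \<Rightarrow> 'a mpoly set"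
  for V G where
  zero: "0 \<in> gen_ideal V G"
| gen: "g \<in> G \<Longrightarrow> r \<in> PR V \<Longrightarrow> r * g \<in> gen_ideal V G"
| add: "a \<in> gen_ideal V G \<Longrightarrow> b \<in> gen_ideal V G \<Longrightarrow> a + b \<in> gen_ideal V G"

fun ideal_pow :: "nat set \<Rightarrow> ('a::comm_ring_1) mpoly set \<Rightarrow> nat \<Rightarrow> 'a mpoly set" where
  "ideal_pow V I 0 = PR V"
| "ideal_pow V I (Suc m) = gen_ideal V {a * b | a b. a \<in> ideal_pow V I m \<and> b \<in> I}"

definition is_ideal :: "nat set \<Rightarrow> ('a::comm_ring_1) mpoly set \<Rightarrow> bool" where
  "is_ideal V P \<longleftrightarrow> P \<subseteq> PR V \<and> 0 \<in> P \<and> (\<forall>a\<in>P. \<forall>b\<in>P. a + b \<in> P)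
     \<and> (\<forall>a\<in>P. \<forall>r\<in>PR V. r * a \<in> P)"

definition prime_ideal :: "nat set \<Rightarrow> ('a::comm_ring_1) mpoly set \<Rightarrow> bool" where
  "prime_ideal V P \<longleftrightarrow> is_ideal V P \<and> P \<noteq> PR V
     \<and> (\<forall>a\<in>PR V. \<forall>b\<in>PR V. a * b \<in> P \<longrightarrow> a \<in> P \<or> b \<in> P)"

definition Ass :: "nat set \<Rightarrow> ('a::comm_ring_1) mpoly set \<Rightarrow> 'a mpoly set set" where
  "Ass V I = {P. prime_ideal V P \<and> (\<exists>h\<in>PR V. P = {g\<in>PR V. g * h \<in> I})}"

text \<open>Symbolic power I^(m) = R \<inter> \<Inter>_{P \<in> Ass I} I^m R_P; an element f of R lies in
  I^m R_P iff s f \<in> I^m for some s \<in> R - P.\<close>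
definition symb_pow :: "nat set \<Rightarrow> ('a::comm_ring_1) mpoly set \<Rightarrow> nat \<Rightarrow> 'a mpoly set" where
  "symb_pow V I m = {f\<in>PR V. \<forall>P\<in>Ass V I. \<exists>s\<in>PR V - P. s * f \<in> ideal_pow V I m}"

definition mdeg :: "(nat \<Rightarrow>\<^sub>0 nat) \<Rightarrow> nat" where
  "mdeg m = (\<Sum>i\<in>Poly_Mapping.keys m. Poly_Mapping.lookup m i)"

definition homogeneous :: "nat \<Rightarrow> ('a::zero) mpoly \<Rightarrow> bool" where
  "homogeneous t f \<longleftrightarrow> (\<forall>m\<in>Poly_Mapping.keys f. mdeg m = t)"

definition alpha :: "('a::zero) mpoly set \<Rightarrow> nat" where
  "alpha I = (LEAST t. \<exists>f\<in>I. f \<noteq> 0 \<and> homogeneous t f)"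

definition Q_edges :: "nat \<Rightarrow> nat set set" where
  "Q_edges n = {{i, i + 1} | i. 1 \<le> i \<and> i \<le> n - 1} \<union> {{n, 1}}"

definition B_facets :: "nat \<Rightarrow> nat set set" where
  "B_facets n = {insert 0 e | e. e \<in> Q_edges n} \<union> {insert (n + 1) e | e. e \<in> Q_edges n}"

definition B_face :: "nat \<Rightarrow> nat set \<Rightarrow> bool" where
  "B_face n \<sigma> \<longleftrightarrow> (\<exists>F\<in>B_facets n. \<sigma> \<subseteq> F)"

definition SR_ideal :: "nat \<Rightarrow> ('a::comm_ring_1) mpoly set" where
  "SR_ideal n = gen_ideal {0..n+1}
     {(\<Prod>i\<in>\<tau>. Var i) | \<tau>. \<tau> \<subseteq> {0..n+1} \<and> \<not> B_face n \<tau>}"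

definition alpha_nm :: "'a::field itself \<Rightarrow> nat \<Rightarrow> nat \<Rightarrow> nat" where
  "alpha_nm _ n m = alpha (symb_pow {0..n+1} (SR_ideal n :: 'a mpoly set) m)"

end

theory Submission
  imports Defs
begin


abbreviation mono :: "(nat \<Rightarrow>\<^sub>0 nat) \<Rightarrow> 'a::comm_ring_1 mpoly" where
  "mono u \<equiv> Poly_Mapping.single u 1"

lemma keys_add_nat: "Poly_Mapping.keys (x + y :: nat \<Rightarrow>\<^sub>0 nat) = Poly_Mapping.keys x \<union> Poly_Mapping.keys y"
  by (auto simp: in_keys_iff lookup_add)

lemma lookup_mult_single: "Poly_Mapping.lookup (Poly_Mapping.single v (1::'a::comm_ring_1) * h) (v + u) = Poly_Mapping.lookup (h::'a mpoly) u"
proof -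
  have "Poly_Mapping.lookup (Poly_Mapping.single v (1::'a) * h) (v+u)
     = (\<Sum>l. (1 when v = l) * (\<Sum>q. Poly_Mapping.lookup h q when v + u = l + q))"
    by (simp only: lookup_mult lookup_single)
  also have "\<dots> = (\<Sum>l. (\<Sum>q. Poly_Mapping.lookup h q when v + u = l + q) when v = l)"
    by (simp only: when_mult mult_1_left)
  also have "\<dots> = (\<Sum>q. Poly_Mapping.lookup h q when v + u = v + q)"
    by (rule Sum_any_when_equal')
  also have "\<dots> = (\<Sum>q. Poly_Mapping.lookup h q when u = q)"
    by (simp only: add_left_cancel)
  also have "\<dots> = Poly_Mapping.lookup h u"
    by (rule Sum_any_when_equal')
  finally show ?thesis .
qed

lemma PR_add: "a \<in> PR V \<Longrightarrow> b \<in> PR V \<Longrightarrow> (a::'a::comm_ring_1 mpoly) + b \<in> PR V"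
  unfolding PR_def using keys_add[of a b] by blast

lemma PR_mult: "a \<in> PR V \<Longrightarrow> b \<in> PR V \<Longrightarrow> (a::'a::comm_ring_1 mpoly) * b \<in> PR V"
  unfolding PR_def using keys_mult[of a b] by (fastforce simp: keys_add_nat)

lemma PR_single: "Poly_Mapping.keys u \<subseteq> V \<Longrightarrow> Poly_Mapping.single u c \<in> PR V"
  unfolding PR_def by auto

lemma PR_one: "(1::'a::comm_ring_1 mpoly) \<in> PR V"
  unfolding PR_def by auto

lemma gen_ideal_mult: assumes r: "r \<in> PR V" shows "a \<in> gen_ideal V G \<Longrightarrow> r * a \<in> gen_ideal V G"
proof (induction a rule: gen_ideal.induct)
  case zero then show ?case by (simp add: gen_ideal.zero)
next
  case (gen g r')
  have "r * (r' * g) = (r * r') * g" by (simp add: mult.assoc)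
  then show ?case using gen r PR_mult gen_ideal.gen by metis
next
  case (add a b)
  then show ?case by (simp add: distrib_left gen_ideal.add)
qed

lemma gen_ideal_sum: "finite S \<Longrightarrow> (\<And>x. x \<in> S \<Longrightarrow> f x \<in> gen_ideal V G) \<Longrightarrow> sum f S \<in> gen_ideal V G"
  by (induction S rule: finite_induct) (auto intro: gen_ideal.zero gen_ideal.add)

lemma poly_decomp: "p = (\<Sum>u\<in>Poly_Mapping.keys p. Poly_Mapping.single u (Poly_Mapping.lookup p u))"
proof (rule poly_mapping_eqI)
  fix k
  show "Poly_Mapping.lookup p k = Poly_Mapping.lookup (\<Sum>u\<in>Poly_Mapping.keys p. Poly_Mapping.single u (Poly_Mapping.lookup p u)) k"
    by (simp add: lookup_sum lookup_single when_def in_keys_iff)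
qed

lemma gen_ideal_monos:
  assumes "(p::'a::comm_ring_1 mpoly) \<in> PR V" "\<And>u. u \<in> Poly_Mapping.keys p \<Longrightarrow> mono u \<in> gen_ideal V G"
  shows "p \<in> gen_ideal V G"
proof -
  have "(\<Sum>u\<in>Poly_Mapping.keys p. Poly_Mapping.single u (Poly_Mapping.lookup p u)) \<in> gen_ideal V G"
  proof (rule gen_ideal_sum)
    fix u assume u: "u \<in> Poly_Mapping.keys p"
    have "Poly_Mapping.single u (Poly_Mapping.lookup p u) = Poly_Mapping.single 0 (Poly_Mapping.lookup p u) * mono u"
      by (simp add: mult_single)
    moreover have "Poly_Mapping.single 0 (Poly_Mapping.lookup p u) \<in> PR V" by (rule PR_single) simp
    ultimately show "Poly_Mapping.single u (Poly_Mapping.lookup p u) \<in> gen_ideal V G"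
      using gen_ideal_mult assms(2)[OF u] by metis
  qed simp
  then show ?thesis using poly_decomp[of p] by simp
qed

lemma gen_ideal_keys:
  assumes "\<And>g u. g \<in> G \<Longrightarrow> u \<in> Poly_Mapping.keys g \<Longrightarrow> P u"
    and "\<And>u v. P u \<Longrightarrow> P (v + u)"
  shows "(a::'a::comm_ring_1 mpoly) \<in> gen_ideal V G \<Longrightarrow> \<forall>u\<in>Poly_Mapping.keys a. P u"
proof (induction a rule: gen_ideal.induct)
  case zero then show ?case by simp
next
  case (gen g r)
  show ?case
  proof
    fix z assume "z \<in> Poly_Mapping.keys (r * g)"
    then obtain x y where "z = x + y" "y \<in> Poly_Mapping.keys g" using keys_mult by blast
    then show "P z" using assms gen by blast
  qed
next
  case (add a b)
  show ?case
  proof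
    fix z assume "z \<in> Poly_Mapping.keys (a + b)"
    then have "z \<in> Poly_Mapping.keys a \<or> z \<in> Poly_Mapping.keys b" using keys_add[of a b] by blast
    then show "P z" using add.IH by blast
  qed
qed

lemma ideal_pow_mult: "r \<in> PR V \<Longrightarrow> a \<in> ideal_pow V I m \<Longrightarrow> r * a \<in> ideal_pow V I m"
  by (cases m) (auto simp: PR_mult gen_ideal_mult)

lemma ideal_pow_Suc_mem: "a \<in> ideal_pow V I m \<Longrightarrow> b \<in> I \<Longrightarrow> (a::'a::comm_ring_1 mpoly) * b \<in> ideal_pow V I (Suc m)"
proof -
  assume "a \<in> ideal_pow V I m" "b \<in> I"
  then have "1 * (a * b) \<in> gen_ideal V {a * b | a b. a \<in> ideal_pow V I m \<and> b \<in> I}"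
    by (intro gen_ideal.gen PR_one) blast
  then show ?thesis by simp
qed

definition wt :: "nat set \<Rightarrow> (nat \<Rightarrow>\<^sub>0 nat) \<Rightarrow> nat" where
  "wt F u = (\<Sum>j\<in>Poly_Mapping.keys u - F. Poly_Mapping.lookup u j)"

lemma wt_superset: "finite S \<Longrightarrow> Poly_Mapping.keys u \<subseteq> S \<Longrightarrow> wt F u = (\<Sum>j\<in>S - F. Poly_Mapping.lookup u j)"
  unfolding wt_def by (rule sum.mono_neutral_left) (auto simp: in_keys_iff)

lemma wt_add: "wt F (x + y) = wt F x + wt F y"
proof -
  let ?S = "Poly_Mapping.keys x \<union> Poly_Mapping.keys y"
  have "wt F (x + y) = (\<Sum>j\<in>?S - F. Poly_Mapping.lookup (x + y) j)"
    by (rule wt_superset) (auto simp: keys_add_nat)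
  also have "\<dots> = (\<Sum>j\<in>?S - F. Poly_Mapping.lookup x j) + (\<Sum>j\<in>?S - F. Poly_Mapping.lookup y j)"
    by (simp add: lookup_add sum.distrib)
  also have "\<dots> = wt F x + wt F y"
    using wt_superset[of ?S x F] wt_superset[of ?S y F] by simp
  finally show ?thesis .
qed

lemma wt_mono: "wt F u \<le> wt F (v + u)"
  by (simp add: wt_add)

lemma mdeg_split: "mdeg u = wt F u + (\<Sum>j\<in>Poly_Mapping.keys u \<inter> F. Poly_Mapping.lookup u j)"
  unfolding mdeg_def wt_def using sum.Int_Diff[of "Poly_Mapping.keys u" "Poly_Mapping.lookup u" F] by simp

lemma wt_zero_iff: "wt F u = 0 \<longleftrightarrow> Poly_Mapping.keys u \<subseteq> F"
  unfolding wt_def by (auto simp: in_keys_iff)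



lemma keys_empty_iff: "Poly_Mapping.keys (c::'k \<Rightarrow>\<^sub>0 'b::zero) = {} \<longleftrightarrow> c = 0"
proof
  assume "Poly_Mapping.keys c = {}"
  then have "\<And>k. Poly_Mapping.lookup c k = Poly_Mapping.lookup 0 k" by (simp add: in_keys_iff[symmetric])
  then show "c = 0" by (rule poly_mapping_eqI)
qed simp

definition restr :: "((nat \<Rightarrow>\<^sub>0 nat) \<Rightarrow> bool) \<Rightarrow> 'a::comm_ring_1 mpoly \<Rightarrow> 'a mpoly" where
  "restr P a = (\<Sum>u\<in>{u\<in>Poly_Mapping.keys a. P u}. Poly_Mapping.single u (Poly_Mapping.lookup a u))"

lemma lookup_restr: "Poly_Mapping.lookup (restr P a) u = (if P u then Poly_Mapping.lookup a u else 0)"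
  unfolding restr_def by (simp add: lookup_sum lookup_single when_def in_keys_iff)

lemma restr_split: "a = restr P a + restr (\<lambda>u. \<not> P u) a"
  by (rule poly_mapping_eqI) (simp add: lookup_add lookup_restr)

lemma keys_restr: "u \<in> Poly_Mapping.keys (restr P a) \<longleftrightarrow> u \<in> Poly_Mapping.keys a \<and> P u"
  by (simp add: in_keys_iff lookup_restr)

lemma keys_mult_wt_ge:
  assumes "\<forall>x\<in>Poly_Mapping.keys a. p \<le> wt F x" "\<forall>y\<in>Poly_Mapping.keys b. q \<le> wt F y"
    "z \<in> Poly_Mapping.keys ((a::'a::comm_ring_1 mpoly) * b)"
  shows "p + q \<le> wt F z"
proof -
  obtain x y where "z = x + y" "x \<in> Poly_Mapping.keys a" "y \<in> Poly_Mapping.keys b"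
    using keys_mult assms(3) by blast
  then show ?thesis using assms by (simp add: wt_add add_mono)
qed

lemma keys_mult_wt_eq:
  assumes "\<forall>x\<in>Poly_Mapping.keys a. wt F x = p" "\<forall>y\<in>Poly_Mapping.keys b. wt F y = q"
    "z \<in> Poly_Mapping.keys ((a::'a::comm_ring_1 mpoly) * b)"
  shows "wt F z = p + q"
proof -
  obtain x y where "z = x + y" "x \<in> Poly_Mapping.keys a" "y \<in> Poly_Mapping.keys b"
    using keys_mult assms(3) by blast
  then show ?thesis using assms by (simp add: wt_add)
qed

lemma lowest:
  fixes a b :: "'a::field mpoly"
  assumes a1: "\<forall>x\<in>Poly_Mapping.keys a. p \<le> wt F x" and a2: "x0 \<in> Poly_Mapping.keys a" "wt F x0 = p"
    and b1: "\<forall>y\<in>Poly_Mapping.keys b. q \<le> wt F y" and b2: "y0 \<in> Poly_Mapping.keys b" "wt F y0 = q"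
  shows "\<exists>z\<in>Poly_Mapping.keys (a * b). wt F z = p + q"
proof -
  define a0 where "a0 = restr (\<lambda>u. wt F u = p) a"
  define a1 where "a1 = restr (\<lambda>u. \<not> wt F u = p) a"
  define b0 where "b0 = restr (\<lambda>u. wt F u = q) b"
  define b1 where "b1 = restr (\<lambda>u. \<not> wt F u = q) b"
  have ka0: "\<forall>x\<in>Poly_Mapping.keys a0. wt F x = p" by (simp add: a0_def keys_restr)
  have ka1: "\<forall>x\<in>Poly_Mapping.keys a1. Suc p \<le> wt F x" proof
    fix x assume "x \<in> Poly_Mapping.keys a1"
    then have "x \<in> Poly_Mapping.keys a" "wt F x \<noteq> p" by (simp_all add: a1_def keys_restr)
    then show "Suc p \<le> wt F x" using a1 by fastforce
  qed
  have ka: "\<forall>x\<in>Poly_Mapping.keys a0. p \<le> wt F x" using ka0 by simp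
  have kb0: "\<forall>x\<in>Poly_Mapping.keys b0. wt F x = q" by (simp add: b0_def keys_restr)
  have kb1: "\<forall>x\<in>Poly_Mapping.keys b1. Suc q \<le> wt F x" proof
    fix x assume "x \<in> Poly_Mapping.keys b1"
    then have "x \<in> Poly_Mapping.keys b" "wt F x \<noteq> q" by (simp_all add: b1_def keys_restr)
    then show "Suc q \<le> wt F x" using b1 by fastforce
  qed
  have kb: "\<forall>x\<in>Poly_Mapping.keys b0. q \<le> wt F x" using kb0 by simp
  have "x0 \<in> Poly_Mapping.keys a0" using a2 by (simp add: a0_def keys_restr)
  then have "a0 \<noteq> 0" by auto
  moreover have "b0 \<noteq> 0"
  proof -
    have "y0 \<in> Poly_Mapping.keys b0" using b2 by (simp add: b0_def keys_restr)
    then show ?thesis by auto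
  qed
  ultimately have "a0 * b0 \<noteq> 0" by simp
  then obtain z where z: "z \<in> Poly_Mapping.keys (a0 * b0)"
    using keys_empty_iff[of "a0 * b0"] by blast
  have wz: "wt F z = p + q" using keys_mult_wt_eq[OF ka0 kb0 z] .
  have ab: "a * b = a0 * b0 + (a0 * b1 + a1 * b0 + a1 * b1)"
  proof -
    have "a = a0 + a1" unfolding a0_def a1_def by (rule restr_split)
    moreover have "b = b0 + b1" unfolding b0_def b1_def by (rule restr_split)
    ultimately show ?thesis by (simp add: distrib_left distrib_right add_ac)
  qed
  have n1: "z \<notin> Poly_Mapping.keys (a0 * b1)" using keys_mult_wt_ge[OF ka kb1, of z] wz by auto
  have n2: "z \<notin> Poly_Mapping.keys (a1 * b0)" using keys_mult_wt_ge[OF ka1 kb, of z] wz by auto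
  have n3: "z \<notin> Poly_Mapping.keys (a1 * b1)" using keys_mult_wt_ge[OF ka1 kb1, of z] wz by auto
  have "Poly_Mapping.lookup (a * b) z = Poly_Mapping.lookup (a0 * b0) z"
    using n1 n2 n3 by (simp add: ab lookup_add in_keys_iff)
  then have "z \<in> Poly_Mapping.keys (a * b)" using z by (simp add: in_keys_iff)
  then show ?thesis using wz by blast
qed



definition ind :: "nat set \<Rightarrow> (nat \<Rightarrow>\<^sub>0 nat)" where
  "ind S = (\<Sum>i\<in>S. Poly_Mapping.single i 1)"

lemma lookup_ind: "finite S \<Longrightarrow> Poly_Mapping.lookup (ind S) p = (if p \<in> S then 1 else 0)"
  unfolding ind_def by (simp add: lookup_sum lookup_single when_def)

lemma keys_ind: "finite S \<Longrightarrow> Poly_Mapping.keys (ind S) = S"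
  by (auto simp: in_keys_iff lookup_ind split: if_splits)

lemma prod_Var: "finite \<tau> \<Longrightarrow> (\<Prod>i\<in>\<tau>. Var i) = (mono (ind \<tau>) :: 'a::comm_ring_1 mpoly)"
  by (induction \<tau> rule: finite_induct) (simp_all add: ind_def Var_def mult_single)

lemma face_mono: "B_face n \<tau> \<Longrightarrow> \<sigma> \<subseteq> \<tau> \<Longrightarrow> B_face n \<sigma>"
  unfolding B_face_def by blast

lemma Q_edges_cases: "e \<in> Q_edges n \<Longrightarrow> (\<exists>i. 1 \<le> i \<and> i \<le> n - 1 \<and> e = {i, i + 1}) \<or> e = {n, 1}"
  unfolding Q_edges_def by blast

lemma facet_cases: "F \<in> B_facets n \<Longrightarrow> \<exists>a e. (a = 0 \<or> a = n + 1) \<and> e \<in> Q_edges n \<and> F = insert a e"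
  unfolding B_facets_def by blast

lemma edge_props: "n \<ge> 3 \<Longrightarrow> e \<in> Q_edges n \<Longrightarrow> e \<subseteq> {1..n} \<and> card e = 2"
  by (drule Q_edges_cases) auto

lemma facet_props: assumes "n \<ge> 3" "F \<in> B_facets n"
  shows "F \<subseteq> {0..n+1} \<and> card F = 3 \<and> finite F"
proof -
  obtain a e where ae: "a = 0 \<or> a = n + 1" "e \<in> Q_edges n" "F = insert a e"
    using facet_cases[OF assms(2)] by blast
  have e: "e \<subseteq> {1..n}" "card e = 2" using edge_props[OF assms(1) ae(2)] by auto
  then have fe: "finite e" by (metis card.infinite zero_neq_numeral)
  have "a \<notin> e" using ae(1) e(1) by auto
  then have "card F = 3" using ae(3) e(2) fe by simp
  moreover have "F \<subseteq> {0..n+1}" using ae e(1) by auto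
  ultimately show ?thesis using ae(3) fe by simp
qed

lemma facet_max:
  assumes "n \<ge> 3" "F \<in> B_facets n" "j \<notin> F"
  shows "\<not> B_face n (insert j F)"
proof
  assume "B_face n (insert j F)"
  then obtain F' where F': "F' \<in> B_facets n" "insert j F \<subseteq> F'" unfolding B_face_def by blast
  have "card (insert j F) = 4" using facet_props[OF assms(1,2)] assms(3) by simp
  moreover have "card (insert j F) \<le> card F'"
    using F' facet_props[OF assms(1) F'(1)] by (intro card_mono) auto
  ultimately show False using facet_props[OF assms(1) F'(1)] by simp
qed

lemma edge_in: "1 \<le> i \<Longrightarrow> i \<le> n - 1 \<Longrightarrow> {i, i + 1} \<in> Q_edges n"
  unfolding Q_edges_def by blast

lemma edge_last: "{n, 1} \<in> Q_edges n"
  unfolding Q_edges_def by blast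

lemma facet_in0: "e \<in> Q_edges n \<Longrightarrow> insert 0 e \<in> B_facets n"
  unfolding B_facets_def by blast

lemma facet_inN: "e \<in> Q_edges n \<Longrightarrow> insert (n + 1) e \<in> B_facets n"
  unfolding B_facets_def by blast

lemma in_facet:
  assumes "n \<ge> 3" "j \<in> {0..n+1}"
  shows "\<exists>F\<in>B_facets n. j \<in> F"
proof -
  have e12: "{1, 1 + 1} \<in> Q_edges n" by (rule edge_in) (use assms(1) in auto)
  consider "j = 0" | "j = n + 1" | "1 \<le> j \<and> j \<le> n - 1" | "j = n" using assms(2) by force
  then show ?thesis
  proof cases
    case 1
    have "insert 0 {1, 1 + 1} \<in> B_facets n" by (intro facet_in0 e12)
    moreover have "j \<in> insert 0 {1, 1 + 1}" using 1 by simp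
    ultimately show ?thesis by (rule bexI[rotated])
  next
    case 2
    have "insert (n + 1) {1, 1 + 1} \<in> B_facets n" by (intro facet_inN e12)
    moreover have "j \<in> insert (n + 1) {1, 1 + 1}" using 2 by simp
    ultimately show ?thesis by (rule bexI[rotated])
  next
    case 3
    have e: "{j, j + 1} \<in> Q_edges n" by (rule edge_in) (use 3 in auto)
    have "insert 0 {j, j + 1} \<in> B_facets n" by (rule facet_in0[OF e])
    moreover have "j \<in> insert 0 {j, j + 1}" by simp
    ultimately show ?thesis by (rule bexI[rotated])
  next
    case 4
    have "insert 0 {n, 1} \<in> B_facets n" by (intro facet_in0 edge_last)
    moreover have "j \<in> insert 0 {n, 1}" using 4 by simp
    ultimately show ?thesis by (rule bexI[rotated])
  qed
qed

lemma three_nonface: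
  assumes "n \<ge> 3" "\<tau> \<subseteq> {1..n}" "3 \<le> card \<tau>"
  shows "\<not> B_face n \<tau>"
proof
  assume "B_face n \<tau>"
  then obtain F where F: "F \<in> B_facets n" "\<tau> \<subseteq> F" unfolding B_face_def by blast
  obtain a e where ae: "a = 0 \<or> a = n + 1" "e \<in> Q_edges n" "F = insert a e"
    using facet_cases[OF F(1)] by blast
  have e: "e \<subseteq> {1..n}" "card e = 2" using edge_props[OF assms(1) ae(2)] by auto
  then have fe: "finite e" by (metis card.infinite zero_neq_numeral)
  have "\<tau> \<subseteq> e" using F(2) ae(1,3) assms(2) by auto
  then have "card \<tau> \<le> 2" using card_mono[OF fe] e(2) by metis
  then show False using assms(3) by simp
qed



abbreviation VV :: "nat \<Rightarrow> nat set" where "VV n \<equiv> {0..n+1}"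

abbreviation GG :: "nat \<Rightarrow> 'a::comm_ring_1 mpoly set" where
  "GG n \<equiv> {(\<Prod>i\<in>\<tau>. Var i) | \<tau>. \<tau> \<subseteq> {0..n+1} \<and> \<not> B_face n \<tau>}"

lemma I_keys:
  assumes "g \<in> (SR_ideal n :: 'a::comm_ring_1 mpoly set)" "u \<in> Poly_Mapping.keys g"
  shows "\<not> B_face n (Poly_Mapping.keys u)"
proof -
  have "\<forall>u\<in>Poly_Mapping.keys g. \<not> B_face n (Poly_Mapping.keys u)"
  proof (rule gen_ideal_keys[where G = "GG n" and V = "VV n"])
    fix g' :: "'a mpoly" and u assume "g' \<in> GG n" "u \<in> Poly_Mapping.keys g'"
    then obtain \<tau> where t: "\<tau> \<subseteq> {0..n+1}" "\<not> B_face n \<tau>" "g' = (\<Prod>i\<in>\<tau>. Var i)" by blast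
    have ft: "finite \<tau>" using t(1) finite_subset by blast
    have "g' = mono (ind \<tau>)" using t(3) prod_Var[OF ft] by simp
    then have "u = ind \<tau>" using \<open>u \<in> Poly_Mapping.keys g'\<close> by simp
    then show "\<not> B_face n (Poly_Mapping.keys u)" using keys_ind[OF ft] t(2) by simp
  next
    fix u v :: "nat \<Rightarrow>\<^sub>0 nat" assume "\<not> B_face n (Poly_Mapping.keys u)"
    then show "\<not> B_face n (Poly_Mapping.keys (v + u))"
      using face_mono[of n "Poly_Mapping.keys (v + u)" "Poly_Mapping.keys u"] by (auto simp: keys_add_nat)
  next
    show "g \<in> gen_ideal (VV n) (GG n)" using assms(1) unfolding SR_ideal_def .
  qed
  then show ?thesis using assms(2) by blast
qed

lemma I_mono:
  assumes "Poly_Mapping.keys u \<subseteq> {0..n+1}" "\<not> B_face n (Poly_Mapping.keys u)"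
  shows "(mono u :: 'a::comm_ring_1 mpoly) \<in> SR_ideal n"
proof -
  let ?\<tau> = "Poly_Mapping.keys u"
  have ft: "finite ?\<tau>" by simp
  have u: "u = (u - ind ?\<tau>) + ind ?\<tau>"
  proof (rule poly_mapping_eqI)
    fix p show "Poly_Mapping.lookup u p = Poly_Mapping.lookup (u - ind ?\<tau> + ind ?\<tau>) p"
      by (cases "p \<in> ?\<tau>") (auto simp: lookup_add lookup_minus lookup_ind in_keys_iff)
  qed
  have "Poly_Mapping.keys (u - ind ?\<tau>) \<subseteq> ?\<tau>" by (auto simp: in_keys_iff lookup_minus)
  then have r: "(mono (u - ind ?\<tau>) :: 'a mpoly) \<in> PR {0..n+1}" using assms(1) by (intro PR_single) blast
  have pv: "(mono (ind ?\<tau>) :: 'a mpoly) = (\<Prod>i\<in>?\<tau>. Var i)" by (rule prod_Var[OF ft, symmetric])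
  have g: "(mono (ind ?\<tau>) :: 'a mpoly) \<in> GG n"
    by (rule CollectI, rule exI[of _ ?\<tau>]) (use assms pv in auto)
  have "(mono u :: 'a mpoly) = mono (u - ind ?\<tau>) * mono (ind ?\<tau>)"
    by (subst u) (simp add: mult_single)
  then show ?thesis unfolding SR_ideal_def using gen_ideal.gen[OF g r] by simp
qed

lemma I_iff:
  assumes "g \<in> PR {0..n+1}"
  shows "(g :: 'a::comm_ring_1 mpoly) \<in> SR_ideal n \<longleftrightarrow> (\<forall>u\<in>Poly_Mapping.keys g. \<not> B_face n (Poly_Mapping.keys u))"
proof
  assume "g \<in> SR_ideal n" then show "\<forall>u\<in>Poly_Mapping.keys g. \<not> B_face n (Poly_Mapping.keys u)"
    using I_keys by blast
next
  assume H: "\<forall>u\<in>Poly_Mapping.keys g. \<not> B_face n (Poly_Mapping.keys u)"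
  show "g \<in> SR_ideal n" unfolding SR_ideal_def
  proof (rule gen_ideal_monos[OF assms])
    fix u assume "u \<in> Poly_Mapping.keys g"
    then show "mono u \<in> gen_ideal (VV n) (GG n)"
      using I_mono[of u n] H assms unfolding SR_ideal_def PR_def by blast
  qed
qed

lemma pow_wt:
  assumes "B_face n F"
  shows "g \<in> ideal_pow {0..n+1} (SR_ideal n :: 'a::comm_ring_1 mpoly set) m \<Longrightarrow> u \<in> Poly_Mapping.keys g \<Longrightarrow> m \<le> wt F u"
proof (induction m arbitrary: g u)
  case 0 then show ?case by simp
next
  case (Suc m)
  have "\<forall>u\<in>Poly_Mapping.keys g. Suc m \<le> wt F u"
  proof (rule gen_ideal_keys[where V = "VV n" and G = "{a * b | a b. a \<in> ideal_pow (VV n) (SR_ideal n) m \<and> b \<in> SR_ideal n}"])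
    fix g' :: "'a mpoly" and u
    assume "g' \<in> {a * b | a b. a \<in> ideal_pow (VV n) (SR_ideal n) m \<and> b \<in> SR_ideal n}" "u \<in> Poly_Mapping.keys g'"
    then obtain a b where ab: "g' = a * b" "a \<in> ideal_pow (VV n) (SR_ideal n) m" "b \<in> SR_ideal n" by blast
    have ka: "\<forall>x\<in>Poly_Mapping.keys a. m \<le> wt F x" using Suc.IH ab(2) by blast
    have kb: "\<forall>y\<in>Poly_Mapping.keys b. 1 \<le> wt F y"
    proof
      fix y assume "y \<in> Poly_Mapping.keys b"
      then have "\<not> B_face n (Poly_Mapping.keys y)" using I_keys ab(3) by blast
      then have "\<not> Poly_Mapping.keys y \<subseteq> F" using face_mono assms by blast
      then show "1 \<le> wt F y" using wt_zero_iff[of F y] by linarith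
    qed
    show "Suc m \<le> wt F u" using keys_mult_wt_ge[OF ka kb] ab(1) \<open>u \<in> Poly_Mapping.keys g'\<close> by simp
  next
    fix u v :: "nat \<Rightarrow>\<^sub>0 nat" assume "Suc m \<le> wt F u"
    then show "Suc m \<le> wt F (v + u)" using wt_mono[of F u v] by linarith
  next
    show "g \<in> gen_ideal (VV n) {a * b | a b. a \<in> ideal_pow (VV n) (SR_ideal n) m \<and> b \<in> SR_ideal n}"
      using Suc.prems(1) by simp
  qed
  then show ?case using Suc.prems(2) by blast
qed



definition PF :: "nat \<Rightarrow> nat set \<Rightarrow> 'a::comm_ring_1 mpoly set" where
  "PF n F = {g \<in> PR {0..n+1}. \<forall>u\<in>Poly_Mapping.keys g. 1 \<le> wt F u}"

lemma PF_Ass: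
  assumes n: "n \<ge> 3" and F: "F \<in> B_facets n"
  shows "(PF n F :: 'a::field mpoly set) \<in> Ass {0..n+1} (SR_ideal n)"
proof -
  have Fp: "F \<subseteq> {0..n+1}" "card F = 3" "finite F" using facet_props[OF n F] by auto
  have Fface: "B_face n F" using F unfolding B_face_def by blast
  define h :: "'a mpoly" where "h = mono (ind F)"
  have hPR: "h \<in> PR {0..n+1}" unfolding h_def using Fp keys_ind[of F] by (intro PR_single) auto
  have eq: "PF n F = {g \<in> PR {0..n+1}. g * h \<in> SR_ideal n}"
  proof (intro set_eqI iffI)
    fix g :: "'a mpoly" assume g: "g \<in> PF n F"
    then have gPR: "g \<in> PR {0..n+1}" and gw: "\<forall>u\<in>Poly_Mapping.keys g. 1 \<le> wt F u" by (auto simp: PF_def)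
    have ghPR: "g * h \<in> PR {0..n+1}" using PR_mult gPR hPR by blast
    have "\<forall>z\<in>Poly_Mapping.keys (g * h). \<not> B_face n (Poly_Mapping.keys z)"
    proof
      fix z assume "z \<in> Poly_Mapping.keys (g * h)"
      then obtain x y where xy: "z = x + y" "x \<in> Poly_Mapping.keys g" "y \<in> Poly_Mapping.keys h"
        using keys_mult by blast
      then have y: "y = ind F" by (simp add: h_def)
      have "wt F x \<noteq> 0" using gw xy(2) by fastforce
      then have "\<not> Poly_Mapping.keys x \<subseteq> F" using wt_zero_iff[of F x] by simp
      then obtain j where j: "j \<in> Poly_Mapping.keys x" "j \<notin> F" by blast
      have "insert j F \<subseteq> Poly_Mapping.keys z" using j xy(1) y keys_ind[OF Fp(3)] by (auto simp: keys_add_nat)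
      then show "\<not> B_face n (Poly_Mapping.keys z)" using facet_max[OF n F j(2)] face_mono by blast
    qed
    then have "g * h \<in> SR_ideal n" using I_iff[OF ghPR] by blast
    then show "g \<in> {g \<in> PR {0..n+1}. g * h \<in> SR_ideal n}" using gPR by blast
  next
    fix g :: "'a mpoly" assume "g \<in> {g \<in> PR {0..n+1}. g * h \<in> SR_ideal n}"
    then have gPR: "g \<in> PR {0..n+1}" and gh: "g * h \<in> SR_ideal n" by auto
    have "\<forall>u\<in>Poly_Mapping.keys g. 1 \<le> wt F u"
    proof
      fix u assume u: "u \<in> Poly_Mapping.keys g"
      show "1 \<le> wt F u"
      proof (rule ccontr)
        assume "\<not> 1 \<le> wt F u"
        then have "wt F u = 0" by simp
        then have ku: "Poly_Mapping.keys u \<subseteq> F" using wt_zero_iff by blast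
        have "Poly_Mapping.lookup (h * g) (ind F + u) = Poly_Mapping.lookup g u"
          unfolding h_def by (rule lookup_mult_single)
        then have "ind F + u \<in> Poly_Mapping.keys (g * h)" using u by (simp add: in_keys_iff mult.commute)
        moreover have "Poly_Mapping.keys (ind F + u) = F" using ku keys_ind[OF Fp(3)] by (auto simp: keys_add_nat)
        ultimately show False using I_keys[OF gh] Fface by fastforce
      qed
    qed
    then show "g \<in> PF n F" using gPR unfolding PF_def by blast
  qed
  have prime: "prime_ideal {0..n+1} (PF n F :: 'a mpoly set)"
    unfolding prime_ideal_def is_ideal_def
  proof (intro conjI ballI impI)
    show "PF n F \<subseteq> PR {0..n+1}" by (auto simp: PF_def)
    show "0 \<in> PF n F" by (simp add: PF_def PR_def)
  next
    fix a b :: "'a mpoly" assume a: "a \<in> PF n F" and b: "b \<in> PF n F"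
    have "\<forall>u\<in>Poly_Mapping.keys (a + b). 1 \<le> wt F u"
      using keys_add[of a b] a b by (auto simp: PF_def)
    then show "a + b \<in> PF n F" using a b by (auto simp: PF_def PR_add)
  next
    fix a r :: "'a mpoly" assume a: "a \<in> PF n F" and r: "r \<in> PR {0..n+1}"
    have aw: "\<forall>y\<in>Poly_Mapping.keys a. 1 \<le> wt F y" using a by (simp add: PF_def)
    have rw: "\<forall>x\<in>Poly_Mapping.keys r. 0 \<le> wt F x" by simp
    have "\<forall>z\<in>Poly_Mapping.keys (r * a). 1 \<le> wt F z"
      using keys_mult_wt_ge[OF rw aw] by simp
    moreover have "r * a \<in> PR {0..n+1}" using a r PR_mult by (auto simp: PF_def)
    ultimately show "r * a \<in> PF n F" by (simp add: PF_def)
  next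
    show "(PF n F :: 'a mpoly set) \<noteq> PR {0..n+1}"
    proof
      assume "(PF n F :: 'a mpoly set) = PR {0..n+1}"
      moreover have "(1::'a mpoly) \<in> PR {0..n+1}" by (rule PR_one)
      ultimately have "(1::'a mpoly) \<in> PF n F" by simp
      then show False by (simp add: PF_def wt_def)
    qed
  next
    fix a b :: "'a mpoly" assume aP: "a \<in> PR {0..n+1}" and bP: "b \<in> PR {0..n+1}" and ab: "a * b \<in> PF n F"
    show "a \<in> PF n F \<or> b \<in> PF n F"
    proof (rule ccontr)
      assume "\<not> (a \<in> PF n F \<or> b \<in> PF n F)"
      then obtain x0 y0 where xy: "x0 \<in> Poly_Mapping.keys a" "wt F x0 = 0" "y0 \<in> Poly_Mapping.keys b" "wt F y0 = 0"
        using aP bP by (auto simp: PF_def not_le)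
      have "\<forall>x\<in>Poly_Mapping.keys a. 0 \<le> wt F x" "\<forall>x\<in>Poly_Mapping.keys b. 0 \<le> wt F x" by simp_all
      then obtain z where "z \<in> Poly_Mapping.keys (a * b)" "wt F z = 0"
        using lowest[of a 0 F x0 b 0 y0] xy by auto
      then show False using ab by (auto simp: PF_def)
    qed
  qed
  show ?thesis unfolding Ass_def using prime eq hPR by blast
qed

lemma lower:
  assumes n: "n \<ge> 3" and m: "1 \<le> m" and t: "t \<le> m"
    and f: "f \<in> symb_pow {0..n+1} (SR_ideal n :: 'a::field mpoly set) m" "f \<noteq> 0" "homogeneous t f"
  shows False
proof -
  have fPR: "f \<in> PR {0..n+1}"
    and fs: "\<forall>P\<in>Ass {0..n+1} (SR_ideal n). \<exists>s\<in>PR {0..n+1} - P. s * f \<in> ideal_pow {0..n+1} (SR_ideal n) m"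
    using f(1) unfolding symb_pow_def by auto
  obtain u where u: "u \<in> Poly_Mapping.keys f" using f(2) keys_empty_iff[of f] by blast
  have du: "mdeg u = t" using f(3) u unfolding homogeneous_def by blast
  obtain F where F: "F \<in> B_facets n" and wu: "wt F u < m"
  proof (cases "Poly_Mapping.keys u = {}")
    case True
    obtain F where "F \<in> B_facets n" using in_facet[OF n, of 0] by auto
    moreover have "wt F u < m" using True m by (simp add: wt_def)
    ultimately show ?thesis using that by blast
  next
    case False
    then obtain j where j: "j \<in> Poly_Mapping.keys u" by blast
    have "Poly_Mapping.keys u \<subseteq> {0..n+1}" using fPR u by (auto simp: PR_def)
    then obtain F where F: "F \<in> B_facets n" "j \<in> F" using in_facet[OF n] j by blast
    have "Poly_Mapping.lookup u j \<le> (\<Sum>j\<in>Poly_Mapping.keys u \<inter> F. Poly_Mapping.lookup u j)"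
      using j F(2) by (intro member_le_sum) auto
    moreover have "1 \<le> Poly_Mapping.lookup u j" using j by (simp add: in_keys_iff)
    ultimately have "wt F u < m" using mdeg_split[of u F] du t by linarith
    then show ?thesis using that F by blast
  qed
  have Fface: "B_face n F" using F unfolding B_face_def by blast
  obtain s where s: "s \<in> PR {0..n+1}" "s \<notin> PF n F" "s * f \<in> ideal_pow {0..n+1} (SR_ideal n) m"
    using fs PF_Ass[OF n F, where 'a='a] by blast
  obtain x0 where x0: "x0 \<in> Poly_Mapping.keys s" "wt F x0 = 0" using s(1,2) by (auto simp: PF_def not_le)
  define v where "v = Min (wt F ` Poly_Mapping.keys f)"
  have v1: "\<forall>y\<in>Poly_Mapping.keys f. v \<le> wt F y" unfolding v_def by simp
  have "v \<in> wt F ` Poly_Mapping.keys f" unfolding v_def using u by (intro Min_in) auto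
  then obtain y0 where y0: "y0 \<in> Poly_Mapping.keys f" "wt F y0 = v" by blast
  have vu: "v \<le> wt F u" using v1 u by blast
  have x1: "\<forall>x\<in>Poly_Mapping.keys s. 0 \<le> wt F x" by simp
  obtain z where z: "z \<in> Poly_Mapping.keys (s * f)" "wt F z = v"
    using lowest[OF x1 x0 v1 y0] by auto
  have "m \<le> wt F z" using pow_wt[OF Fface s(3) z(1)] .
  then show False using z(2) vu wu by linarith
qed



lemma pairing:
  assumes "finite K" "\<forall>j\<in>K. \<tau> j \<subseteq> {0..n+1} \<and> \<not> B_face n (\<tau> j)" "Poly_Mapping.keys e' \<subseteq> {0..n+1}"
  shows "(mono (e' + (\<Sum>j\<in>K. ind (\<tau> j))) :: 'a::comm_ring_1 mpoly) \<in> ideal_pow {0..n+1} (SR_ideal n) (card K)"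
  using assms
proof (induction K rule: finite_induct)
  case empty
  then show ?case by (simp add: PR_single)
next
  case (insert j K)
  have IH: "(mono (e' + (\<Sum>j\<in>K. ind (\<tau> j))) :: 'a mpoly) \<in> ideal_pow {0..n+1} (SR_ideal n) (card K)"
    using insert by blast
  have tj: "\<tau> j \<subseteq> {0..n+1}" "\<not> B_face n (\<tau> j)" using insert(4) by auto
  have ft: "finite (\<tau> j)" using tj(1) finite_subset by blast
  have g: "(mono (ind (\<tau> j)) :: 'a mpoly) \<in> SR_ideal n"
    using I_mono[of "ind (\<tau> j)" n] tj keys_ind[OF ft] by simp
  have eq: "e' + (\<Sum>j\<in>insert j K. ind (\<tau> j)) = (e' + (\<Sum>j\<in>K. ind (\<tau> j))) + ind (\<tau> j)"
    using insert(1,2) by (simp add: add_ac)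
  have "(mono (e' + (\<Sum>j\<in>insert j K. ind (\<tau> j))) :: 'a mpoly)
        = mono (e' + (\<Sum>j\<in>K. ind (\<tau> j))) * mono (ind (\<tau> j))"
    by (simp only: eq mult_single mult_1)
  then show ?case using ideal_pow_Suc_mem[OF IH g] insert(1,2) by simp
qed

lemma lookup_es: "finite e \<Longrightarrow> Poly_Mapping.lookup (\<Sum>c\<in>e. Poly_Mapping.single c k) p = (if p \<in> e then (k::nat) else 0)"
  by (simp add: lookup_sum lookup_single when_def)

lemma J_props:
  assumes "n \<ge> 2 * k"
  shows "finite ((\<lambda>i. 2 * i + 1) ` {..<k})" "card ((\<lambda>i. 2 * i + 1) ` {..<k}) = k"
    "(\<lambda>i. 2 * i + 1) ` {..<k} \<subseteq> {1..n}" "n \<notin> (\<lambda>i. 2 * i + 1) ` {..<k}"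
proof -
  show "finite ((\<lambda>i. 2 * i + 1) ` {..<k})" by simp
  have "inj_on (\<lambda>i::nat. 2 * i + 1) {..<k}" by (auto simp: inj_on_def)
  then show "card ((\<lambda>i. 2 * i + 1) ` {..<k}) = k" by (simp add: card_image)
  show "(\<lambda>i. 2 * i + 1) ` {..<k} \<subseteq> {1..n}" using assms by auto
  show "n \<notin> (\<lambda>i. 2 * i + 1) ` {..<k}" using assms by auto
qed

lemma J_edge:
  assumes "n \<ge> 2 * k" "e \<in> Q_edges n"
  shows "card ((\<lambda>i. 2 * i + 1) ` {..<k} \<inter> e) \<le> 1"
proof -
  let ?J = "(\<lambda>i. 2 * i + 1) ` {..<k}"
  have "\<forall>x\<in>?J \<inter> e. \<forall>y\<in>?J \<inter> e. x = y"
  proof (intro ballI)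
    fix x y assume x: "x \<in> ?J \<inter> e" and y: "y \<in> ?J \<inter> e"
    have ox: "odd x" using x by auto
    have oy: "odd y" using y by auto
    consider i where "1 \<le> i" "i \<le> n - 1" "e = {i, i + 1}" | "e = {n, 1}" using Q_edges_cases[OF assms(2)] by blast
    then show "x = y"
    proof cases
      case 1
      then show ?thesis using x y ox oy by auto
    next
      case 2
      then show ?thesis using x y J_props(4)[OF assms(1)] by auto
    qed
  qed
  then show ?thesis using card_le_Suc0_iff_eq[of "?J \<inter> e"] by auto
qed

lemma upper:
  assumes k: "k \<ge> 2" and n: "n = 2 * k + t"
  shows "(mono (ind ((\<lambda>i. 2 * i + 1) ` {..<k})) :: 'a::field mpoly) \<in> symb_pow {0..n+1} (SR_ideal n) (k - 1)"
proof -
  define J where "J = (\<lambda>i::nat. 2 * i + 1) ` {..<k}"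
  have n2: "n \<ge> 2 * k" "n \<ge> 3" using n k by auto
  have fJ: "finite J" and cJ: "card J = k" and sJ: "J \<subseteq> {1..n}"
    using J_props[OF n2(1)] unfolding J_def by auto
  define f :: "'a mpoly" where "f = mono (ind J)"
  have fPR: "f \<in> PR {0..n+1}" unfolding f_def using sJ keys_ind[OF fJ] by (intro PR_single) auto
  have "\<forall>P\<in>Ass {0..n+1} (SR_ideal n). \<exists>s\<in>PR {0..n+1} - P. s * f \<in> ideal_pow {0..n+1} (SR_ideal n) (k - 1)"
  proof
    fix P assume "P \<in> Ass {0..n+1} (SR_ideal n :: 'a mpoly set)"
    then obtain h where pr: "prime_ideal {0..n+1} P" and hPR: "h \<in> PR {0..n+1}"
      and Peq: "P = {g \<in> PR {0..n+1}. g * h \<in> SR_ideal n}" unfolding Ass_def by blast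
    have hI: "h \<notin> SR_ideal n"
    proof
      assume hI: "h \<in> SR_ideal n"
      have "P = PR {0..n+1}"
      proof (rule set_eqI)
        fix g show "g \<in> P \<longleftrightarrow> g \<in> PR {0..n+1}"
          using gen_ideal_mult[of g "{0..n+1}" h] hI unfolding Peq SR_ideal_def by auto
      qed
      then show False using pr unfolding prime_ideal_def by blast
    qed
    then obtain u where u: "u \<in> Poly_Mapping.keys h" "B_face n (Poly_Mapping.keys u)"
      using I_iff[OF hPR] by blast
    then obtain F where F: "F \<in> B_facets n" "Poly_Mapping.keys u \<subseteq> F" unfolding B_face_def by blast
    obtain a e where ae: "a = 0 \<or> a = n + 1" "e \<in> Q_edges n" "F = insert a e"
      using facet_cases[OF F(1)] by blast
    have e: "e \<subseteq> {1..n}" "card e = 2" using edge_props[OF n2(2) ae(2)] by auto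
    then have fe: "finite e" by (metis card.infinite zero_neq_numeral)
    define es where "es = (\<Sum>c\<in>e. Poly_Mapping.single c k)"
    have les: "\<And>p. Poly_Mapping.lookup es p = (if p \<in> e then k else 0)"
      unfolding es_def using lookup_es[OF fe] by blast
    have kes: "Poly_Mapping.keys es = e" using k by (auto simp: in_keys_iff les split: if_splits)
    define s :: "'a mpoly" where "s = mono es"
    have sPR: "s \<in> PR {0..n+1}" unfolding s_def using kes e by (intro PR_single) auto
    have sP: "s \<notin> P"
    proof
      assume "s \<in> P"
      then have sh: "s * h \<in> SR_ideal n" unfolding Peq by blast
      have "Poly_Mapping.lookup (s * h) (es + u) = Poly_Mapping.lookup h u"
        unfolding s_def by (rule lookup_mult_single)
      then have "es + u \<in> Poly_Mapping.keys (s * h)" using u(1) by (simp add: in_keys_iff)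
      moreover have "Poly_Mapping.keys (es + u) \<subseteq> F" using kes F(2) ae(3) by (auto simp: keys_add_nat)
      ultimately show False using I_keys[OF sh] F(1) unfolding B_face_def by blast
    qed
    have "s * f \<in> ideal_pow {0..n+1} (SR_ideal n) (k - 1)"
    proof -
      have cJe: "card (J \<inter> e) \<le> 1" using J_edge[OF n2(1) ae(2)] unfolding J_def .
      have "card (J - e) = card J - card (J \<inter> e)" using fJ by (simp add: card_Diff_subset_Int)
      then have "k - 1 \<le> card (J - e)" using cJ cJe by linarith
      then obtain K where K: "K \<subseteq> J - e" "card K = k - 1" by (rule obtain_subset_with_card_n)
      have fK: "finite K" using K(1) fJ finite_subset by blast
      have Kt: "\<forall>j\<in>K. insert j e \<subseteq> {0..n+1} \<and> \<not> B_face n (insert j e)"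
      proof
        fix j assume j: "j \<in> K"
        then have j1: "j \<in> {1..n}" "j \<notin> e" using K(1) sJ by auto
        have "card (insert j e) = 3" using j1(2) fe e(2) by simp
        then have "\<not> B_face n (insert j e)" using three_nonface[OF n2(2), of "insert j e"] j1 e(1) by auto
        then show "insert j e \<subseteq> {0..n+1} \<and> \<not> B_face n (insert j e)" using j1 e(1) by auto
      qed
      define S where "S = (\<Sum>j\<in>K. ind (insert j e))"
      have lS: "\<And>p. Poly_Mapping.lookup S p = (\<Sum>j\<in>K. (if p \<in> insert j e then 1 else 0))"
        unfolding S_def using fe by (simp add: lookup_sum lookup_ind)
      have bound: "\<And>p. Poly_Mapping.lookup S p \<le> Poly_Mapping.lookup (es + ind J) p"
      proof -
        fix p
        show "Poly_Mapping.lookup S p \<le> Poly_Mapping.lookup (es + ind J) p"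
        proof (cases "p \<in> e")
          case True
          then have "Poly_Mapping.lookup S p = card K" by (simp add: lS)
          then show ?thesis using True K(2) by (simp add: lookup_add les)
        next
          case False
          then have "Poly_Mapping.lookup S p = (\<Sum>j\<in>K. (if p = j then 1 else 0))" by (simp add: lS)
          also have "\<dots> = (if p \<in> K then 1 else 0)" using fK by simp
          finally show ?thesis using K(1) fJ by (auto simp: lookup_add lookup_ind)
        qed
      qed
      define e' where "e' = (es + ind J) - S"
      have eq: "es + ind J = e' + S"
      proof (rule poly_mapping_eqI)
        fix q
        have "Poly_Mapping.lookup S q \<le> Poly_Mapping.lookup (es + ind J) q" by (rule bound)
        then show "Poly_Mapping.lookup (es + ind J) q = Poly_Mapping.lookup (e' + S) q"
          unfolding e'_def lookup_add lookup_minus by linarith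
      qed
      have ke': "Poly_Mapping.keys e' \<subseteq> {0..n+1}"
      proof
        fix p assume "p \<in> Poly_Mapping.keys e'"
        then have "p \<in> Poly_Mapping.keys (es + ind J)" by (auto simp: e'_def in_keys_iff lookup_minus)
        then show "p \<in> {0..n+1}" using kes keys_ind[OF fJ] e(1) sJ by (auto simp: keys_add_nat)
      qed
      have "(mono (e' + S) :: 'a mpoly) \<in> ideal_pow {0..n+1} (SR_ideal n) (card K)"
        unfolding S_def by (rule pairing[OF fK Kt ke'])
      moreover have "s * f = mono (e' + S)" unfolding s_def f_def by (simp add: mult_single eq)
      ultimately show ?thesis using K(2) by simp
    qed
    then show "\<exists>s\<in>PR {0..n+1} - P. s * f \<in> ideal_pow {0..n+1} (SR_ideal n) (k - 1)"
      using sPR sP by blast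
  qed
  then show ?thesis using fPR unfolding symb_pow_def f_def J_def by blast
qed



theorem proposition3p15:
  fixes k t :: nat
  assumes "k \<ge> 2"
  shows "alpha_nm TYPE('a::field) (2 * k + t) (k - 1) = k"
proof -
  define n where "n = 2 * k + t"
  have n3: "n \<ge> 3" using assms by (simp add: n_def)
  define J where "J = (\<lambda>i::nat. 2 * i + 1) ` {..<k}"
  have fJ: "finite J" "card J = k" using J_props[of k n] unfolding n_def J_def by auto
  let ?S = "symb_pow {0..n+1} (SR_ideal n :: 'a mpoly set) (k - 1)"
  have fS: "(mono (ind J) :: 'a mpoly) \<in> ?S" unfolding J_def by (rule upper[OF assms n_def])
  have kf: "Poly_Mapping.keys (mono (ind J) :: 'a mpoly) = {ind J}" by simp
  have nz: "(mono (ind J) :: 'a mpoly) \<noteq> 0"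
  proof
    assume "(mono (ind J) :: 'a mpoly) = 0"
    then have "Poly_Mapping.keys (mono (ind J) :: 'a mpoly) = {}" by simp
    then show False using kf by simp
  qed
  have "mdeg (ind J) = (\<Sum>j\<in>J. Poly_Mapping.lookup (ind J) j)" unfolding mdeg_def using keys_ind[OF fJ(1)] by simp
  also have "\<dots> = (\<Sum>j\<in>J. 1)" by (rule sum.cong) (auto simp: lookup_ind[OF fJ(1)])
  also have "\<dots> = k" using fJ by simp
  finally have dJ: "mdeg (ind J) = k" .
  have hom: "homogeneous k (mono (ind J) :: 'a mpoly)"
    unfolding homogeneous_def using kf dJ by simp
  have "alpha ?S = k" unfolding alpha_def
  proof (rule Least_equality)
    show "\<exists>f\<in>?S. f \<noteq> 0 \<and> homogeneous k f" using fS nz hom by blast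
  next
    fix y assume "\<exists>f\<in>?S. f \<noteq> 0 \<and> homogeneous y f"
    then obtain f where f: "f \<in> ?S" "f \<noteq> 0" "homogeneous y f" by blast
    show "k \<le> y"
    proof (rule ccontr)
      assume "\<not> k \<le> y"
      then have "y \<le> k - 1" by simp
      moreover have "1 \<le> k - 1" using assms by simp
      ultimately show False using lower[OF n3 _ _ f] by blast
    qed
  qed
  then show ?thesis unfolding alpha_nm_def n_def by simp
qed

end
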